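(* Let $t,n\in\mathbb N$ and $\alpha_1,\alpha_2,\tau\geq 0$. Let $\mathcal H$ be an $n$-vertex hypergraph with codegree at most $t$ such that every edge has size at least $2(1+\alpha_2)^2$. Let $e\in\mathcal H$, $r:=|V(e)|$, $m_1:=|\{f\in N(e): |V(f)|\geq(1+\alpha_1)r\}|$ and $m_2:=|\{f\in N(e): (1+\alpha_1)r>|V(f)|\geq r/(1+\alpha_2)\}|$. Then (i) $(1+\alpha_1)m_1+\frac{m_2}{1+\alpha_2}\leq tn\left(1+\frac{1+\alpha_2}{r-1-\alpha_2}\right)$. Moreover, if $m_1+m_2\geq t(1-\tau)n$ and $\alpha_1>0$, then (ii) $m_1\leq\left(\tau+\frac{1+\alpha_2+\alpha_2 r}{r-1-\alpha_2}\right)\frac{tn}{\alpha_1}$.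
   Context: A hypergraph $\mathcal H$ has a finite vertex set $V(\mathcal H)$ and a finite set of edges, each edge $e$ with a nonempty set $V(e)\subseteq V(\mathcal H)$ (multiple edges allowed); $n$-vertex means $|V(\mathcal H)|=n$, and the size of $e$ is $|V(e)|$. The codegree of $\mathcal H$ is the maximum over distinct vertices $u,v$ of the number of edges containing both. $N(e)$ is the set of edges $f\neq e$ with $V(e)\cap V(f)\neq\emptyset$. *)

theory Defs
  imports Main Complex_Main
begin

text \<open>A hypergraph: finite vertex set V, finite set of edge labels E (so multiple
edges with the same vertex set are allowed), and vertex map vs giving V(e).\<close>

definition hypergraph :: "'v set \<Rightarrow> 'e set \<Rightarrow> ('e \<Rightarrow> 'v set) \<Rightarrow> bool" where
  "hypergraph V E vs \<longleftrightarrow> finite V \<and> finite E \<and>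
     (\<forall>e\<in>E. vs e \<noteq> {} \<and> vs e \<subseteq> V)"

definition codegree :: "'v set \<Rightarrow> 'e set \<Rightarrow> ('e \<Rightarrow> 'v set) \<Rightarrow> nat" where
  "codegree V E vs =
     Sup ({card {e\<in>E. u \<in> vs e \<and> v \<in> vs e} | u v. u \<in> V \<and> v \<in> V \<and> u \<noteq> v} \<union> {0})"

definition nbhd :: "'e set \<Rightarrow> ('e \<Rightarrow> 'v set) \<Rightarrow> 'e \<Rightarrow> 'e set" where
  "nbhd E vs e = {f\<in>E. f \<noteq> e \<and> vs e \<inter> vs f \<noteq> {}}"

end

theory Submission imports Defs begin

lemma codeg_le:
  assumes "finite E" "u\<in>V" "v\<in>V" "u\<noteq>v"
  shows "card {f\<in>E. u\<in>vs f \<and> v\<in>vs f} \<le> codegree V E vs"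
proof -
  let ?S = "{card {e\<in>E. u \<in> vs e \<and> v \<in> vs e} | u v. u \<in> V \<and> v \<in> V \<and> u \<noteq> v} \<union> {0::nat}"
  have "bdd_above ?S"
    by (rule bdd_aboveI[where M="card E"]) (auto intro!: card_mono assms(1))
  moreover have "card {f\<in>E. u\<in>vs f \<and> v\<in>vs f} \<in> ?S" using assms by blast
  ultimately show ?thesis unfolding codegree_def by (rule cSup_upper[rotated])
qed

lemma inner_sum:
  assumes "finite V" "vs f \<subseteq> V"
  shows "(\<Sum>v\<in>V-{u}. if u\<in>vs f \<and> v\<in>vs f then 1 else (0::nat)) = (if u \<in> vs f then card (vs f) - 1 else 0)"
proof (cases "u \<in> vs f")
  case True
  have "(\<Sum>v\<in>V-{u}. if u\<in>vs f \<and> v\<in>vs f then 1 else (0::nat)) = (\<Sum>v\<in>V-{u}. if v\<in>vs f then 1 else (0::nat))"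
    using True by simp
  also have "\<dots> = card ((V-{u}) \<inter> vs f)" using assms(1) by (simp add: sum.If_cases)
  also have "(V-{u}) \<inter> vs f = vs f - {u}" using assms(2) by blast
  also have "card (vs f - {u}) = card (vs f) - 1" using True by simp
  finally show ?thesis using True by simp
qed simp

lemma count:
  assumes H: "hypergraph V E vs" and eE: "e \<in> E" and cd: "codegree V E vs \<le> t"
  shows "(\<Sum>f\<in>nbhd E vs e. card (vs f) - 1) \<le> t * card (vs e) * (card V - 1)"
proof -
  let ?N = "nbhd E vs e"
  let ?I = "\<lambda>f u v. if u\<in>vs f \<and> v\<in>vs f then 1 else (0::nat)"
  have fV: "finite V" and fE: "finite E" and sub: "\<And>f. f\<in>E \<Longrightarrow> vs f \<subseteq> V"
    using H unfolding hypergraph_def by auto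
  have NE: "?N \<subseteq> E" unfolding nbhd_def by auto
  have fN: "finite ?N" using NE fE finite_subset by blast
  have fe: "finite (vs e)" using sub[OF eE] fV finite_subset by blast
  have h1: "card (vs f) - 1 \<le> (\<Sum>u\<in>vs e. \<Sum>v\<in>V-{u}. ?I f u v)" if f: "f \<in> ?N" for f
  proof -
    obtain u0 where u0: "u0 \<in> vs e" "u0 \<in> vs f" using f unfolding nbhd_def by auto
    have "(\<Sum>u\<in>vs e. \<Sum>v\<in>V-{u}. ?I f u v) = (\<Sum>u\<in>vs e. if u \<in> vs f then card (vs f) - 1 else 0)"
    proof (intro sum.cong refl)
      fix u have "vs f \<subseteq> V" using f NE sub by blast
      from inner_sum[of V vs f u, OF fV this] show "(\<Sum>v\<in>V-{u}. ?I f u v) = (if u \<in> vs f then card (vs f) - 1 else 0)" .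
    qed
    also have "\<dots> \<ge> (if u0 \<in> vs f then card (vs f) - 1 else 0)"
      by (rule member_le_sum[OF u0(1) _ fe]) auto
    finally show ?thesis using u0 by simp
  qed
  have "(\<Sum>f\<in>?N. card (vs f) - 1) \<le> (\<Sum>f\<in>?N. \<Sum>u\<in>vs e. \<Sum>v\<in>V-{u}. ?I f u v)"
    by (rule sum_mono) (rule h1)
  also have "\<dots> = (\<Sum>u\<in>vs e. \<Sum>f\<in>?N. \<Sum>v\<in>V-{u}. ?I f u v)" by (rule sum.swap)
  also have "\<dots> = (\<Sum>u\<in>vs e. \<Sum>v\<in>V-{u}. \<Sum>f\<in>?N. ?I f u v)"
    by (intro sum.cong refl sum.swap)
  also have "\<dots> \<le> (\<Sum>u\<in>vs e. \<Sum>v\<in>V-{u}. t)"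
  proof (intro sum_mono)
    fix u v assume u: "u \<in> vs e" and v: "v \<in> V - {u}"
    have "(\<Sum>f\<in>?N. ?I f u v) = card {f\<in>?N. u\<in>vs f \<and> v\<in>vs f}"
      using fN by (simp add: sum.If_cases Int_def conj_commute)
    also have "\<dots> \<le> card {f\<in>E. u\<in>vs f \<and> v\<in>vs f}"
      using NE fE by (intro card_mono) auto
    also have "\<dots> \<le> codegree V E vs"
      using codeg_le[OF fE, of u V v vs] u v sub[OF eE] by auto
    finally show "(\<Sum>f\<in>?N. ?I f u v) \<le> t" using cd by simp
  qed
  also have "\<dots> = (\<Sum>u\<in>vs e. t * (card V - 1))"
    using sub[OF eE] fV by (intro sum.cong refl) auto
  also have "\<dots> = t * card (vs e) * (card V - 1)" by simp
  finally show ?thesis .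
qed

lemma part2:
  fixes m1 m2 a1 a2 tau B T r :: real
  assumes "(1 + a1) * m1 + m2 / (1 + a2) \<le> B" "m1 \<ge> 0" "m2 \<ge> 0" "a1 > 0" "a2 \<ge> 0"
    and "B = T * (1 + (1 + a2) / (r - 1 - a2))" "r - 1 - a2 > 0"
    and "m1 + m2 \<ge> T - T * tau"
  shows "m1 \<le> (tau + (1 + a2 + a2 * r) / (r - 1 - a2)) * T / a1"
proof -
  have q: "m2 / (1 + a2) \<le> B" using assms(1-4) by (smt (verit) mult_nonneg_nonneg)
  have "m2 / (1 + a2) = m2 - a2 * (m2 / (1 + a2))" using assms(5) by (simp add: field_simps)
  hence "a1 * m1 + (m1 + m2) - a2 * (m2 / (1 + a2)) \<le> B" using assms(1) by (simp add: algebra_simps)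
  moreover have "a2 * (m2 / (1 + a2)) \<le> a2 * B" using q assms(5) by (rule mult_left_mono)
  ultimately have "a1 * m1 \<le> (1 + a2) * B - T + T * tau" using assms(8) by (simp add: algebra_simps)
  also have "(1 + a2) * B - T + T * tau = (tau + (1 + a2 + a2 * r) / (r - 1 - a2)) * T"
    using assms(7) unfolding assms(6) by (simp add: field_simps)
  finally show ?thesis using assms(4) by (simp add: field_simps mult.commute)
qed

theorem proposition3p6:
  fixes V :: "'v set" and E :: "'e set" and vs :: "'e \<Rightarrow> 'v set"
    and t n :: nat and \<alpha>1 \<alpha>2 \<tau> :: real and e :: 'e
  assumes "hypergraph V E vs"
    and "card V = n"
    and "codegree V E vs \<le> t"
    and "\<alpha>1 \<ge> 0" and "\<alpha>2 \<ge> 0" and "\<tau> \<ge> 0"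
    and "\<forall>f\<in>E. real (card (vs f)) \<ge> 2 * (1 + \<alpha>2)^2"
    and "e \<in> E"
  defines "r \<equiv> card (vs e)"
    and "m1 \<equiv> card {f \<in> nbhd E vs e. real (card (vs f)) \<ge> (1 + \<alpha>1) * real (card (vs e))}"
    and "m2 \<equiv> card {f \<in> nbhd E vs e. (1 + \<alpha>1) * real (card (vs e)) > real (card (vs f)) \<and>
                                       real (card (vs f)) \<ge> real (card (vs e)) / (1 + \<alpha>2)}"
  shows "((1 + \<alpha>1) * real m1 + real m2 / (1 + \<alpha>2)
           \<le> real t * real n * (1 + (1 + \<alpha>2) / (real r - 1 - \<alpha>2))) \<and>
         (real m1 + real m2 \<ge> real t * (1 - \<tau>) * real n \<longrightarrow> \<alpha>1 > 0 \<longrightarrow>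
           real m1 \<le> (\<tau> + (1 + \<alpha>2 + \<alpha>2 * real r) / (real r - 1 - \<alpha>2)) * real t * real n / \<alpha>1)"
proof -
  let ?N = "nbhd E vs e"
  define d where "d f = real (card (vs f))" for f
  define M1 where "M1 = {f \<in> nbhd E vs e. real (card (vs f)) \<ge> (1 + \<alpha>1) * real (card (vs e))}"
  define M2 where "M2 = {f \<in> nbhd E vs e. (1 + \<alpha>1) * real (card (vs e)) > real (card (vs f)) \<and>
                                       real (card (vs f)) \<ge> real (card (vs e)) / (1 + \<alpha>2)}"
  have H: "hypergraph V E vs" by fact
  have fV: "finite V" and fE: "finite E" and sub: "\<And>f. f\<in>E \<Longrightarrow> vs f \<subseteq> V \<and> vs f \<noteq> {}"
    using H unfolding hypergraph_def by auto
  have NE: "?N \<subseteq> E" unfolding nbhd_def by auto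
  have fN: "finite ?N" using NE fE finite_subset by blast
  have card1: "card (vs f) \<ge> 1" if "f \<in> E" for f
    using sub[OF that] fV finite_subset by (metis One_nat_def Suc_leI card_gt_0_iff)
  have rge: "real r \<ge> 2 * (1 + \<alpha>2)^2" using assms(7,8) unfolding r_def by auto
  have "(1 + \<alpha>2)^2 \<ge> 1 + \<alpha>2" using assms(5) by (simp add: power2_eq_square)
  hence rpos: "real r - 1 - \<alpha>2 > 0" using rge assms(5) by linarith
  have r0: "real r > 0" using rpos assms(5) by linarith
  define \<delta> where "\<delta> = (1 + \<alpha>2) / (real r - 1 - \<alpha>2)"
  have \<delta>0: "\<delta> \<ge> 0" unfolding \<delta>_def using rpos assms(5) by simp
  have cnt: "(\<Sum>f\<in>?N. card (vs f) - 1) \<le> t * r * (n - 1)"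
    using count[OF H assms(8,3)] assms(2) unfolding r_def by simp
  have S: "(\<Sum>f\<in>?N. d f - 1) \<le> real t * real r * real n"
  proof -
    have "(\<Sum>f\<in>?N. d f - 1) = real (\<Sum>f\<in>?N. card (vs f) - 1)"
      unfolding of_nat_sum d_def using card1 NE by (intro sum.cong refl) (auto simp: of_nat_diff)
    also have "\<dots> \<le> real (t * r * (n - 1))" using cnt by linarith
    also have "\<dots> \<le> real t * real r * real n" by (simp add: of_nat_diff mult_left_mono)
    finally show ?thesis .
  qed
  have M12N: "M1 \<union> M2 \<subseteq> ?N" unfolding M1_def M2_def by auto
  have disj: "M1 \<inter> M2 = {}" unfolding M1_def M2_def by auto
  have fM1: "finite M1" and fM2: "finite M2" using M12N fN finite_subset by auto
  have lowd: "real r \<le> (1 + \<alpha>2) * d f" if "f \<in> M1 \<union> M2" for f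
  proof (cases "f \<in> M1")
    case True
    hence "d f \<ge> (1 + \<alpha>1) * real r" unfolding M1_def d_def r_def by auto
    moreover have "(1 + \<alpha>1) * real r \<ge> real r" using assms(4) r0 by simp
    moreover have "(1 + \<alpha>2) * d f \<ge> d f" using assms(5) calculation r0 by (simp add: algebra_simps)
    ultimately show ?thesis by linarith
  next
    case False
    hence "d f \<ge> real r / (1 + \<alpha>2)" using that unfolding M2_def d_def r_def by auto
    thus ?thesis using assms(5) by (simp add: field_simps)
  qed
  have dle: "d f \<le> (1 + \<delta>) * (d f - 1)" if "f \<in> M1 \<union> M2" for f
  proof -
    have "real r - 1 - \<alpha>2 \<le> (1 + \<alpha>2) * (d f - 1)" using lowd[OF that] by (simp add: algebra_simps)
    hence "1 \<le> \<delta> * (d f - 1)" unfolding \<delta>_def using rpos by (simp add: field_simps)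
    thus ?thesis by (simp add: algebra_simps)
  qed
  have "(\<Sum>f\<in>M1 \<union> M2. d f) \<le> (\<Sum>f\<in>M1 \<union> M2. (1 + \<delta>) * (d f - 1))"
    by (rule sum_mono) (rule dle)
  also have "\<dots> = (1 + \<delta>) * (\<Sum>f\<in>M1 \<union> M2. d f - 1)" by (simp add: sum_distrib_left)
  also have "(\<Sum>f\<in>M1 \<union> M2. d f - 1) \<le> (\<Sum>f\<in>?N. d f - 1)"
    using M12N fN card1 NE by (intro sum_mono2) (auto simp: d_def)
  hence "(1 + \<delta>) * (\<Sum>f\<in>M1 \<union> M2. d f - 1) \<le> (1 + \<delta>) * (\<Sum>f\<in>?N. d f - 1)"
    using \<delta>0 by (intro mult_left_mono) auto
  finally have U: "(\<Sum>f\<in>M1 \<union> M2. d f) \<le> (1 + \<delta>) * (real t * real r * real n)"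
    using S \<delta>0 by (smt (verit) mult_left_mono)
  have A1: "real r * ((1 + \<alpha>1) * real m1) \<le> (\<Sum>f\<in>M1. d f)"
  proof -
    have "(\<Sum>f\<in>M1. (1 + \<alpha>1) * real r) \<le> (\<Sum>f\<in>M1. d f)"
      by (rule sum_mono) (auto simp: M1_def d_def r_def)
    thus ?thesis unfolding m1_def M1_def[symmetric] by (simp add: algebra_simps)
  qed
  have A2: "real r * (real m2 / (1 + \<alpha>2)) \<le> (\<Sum>f\<in>M2. d f)"
  proof -
    have "(\<Sum>f\<in>M2. real r / (1 + \<alpha>2)) \<le> (\<Sum>f\<in>M2. d f)"
      by (rule sum_mono) (auto simp: M2_def d_def r_def)
    thus ?thesis unfolding m2_def M2_def[symmetric] by (simp add: algebra_simps)
  qed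
  have "(\<Sum>f\<in>M1 \<union> M2. d f) = (\<Sum>f\<in>M1. d f) + (\<Sum>f\<in>M2. d f)"
    using fM1 fM2 disj by (rule sum.union_disjoint)
  hence "real r * ((1 + \<alpha>1) * real m1 + real m2 / (1 + \<alpha>2)) \<le> real r * (real t * real n * (1 + \<delta>))"
    using A1 A2 U by (simp add: algebra_simps)
  hence P1: "(1 + \<alpha>1) * real m1 + real m2 / (1 + \<alpha>2) \<le> real t * real n * (1 + \<delta>)"
    using r0 by (simp add: mult_le_cancel_left_pos)
  show ?thesis
  proof (intro conjI impI)
    show "(1 + \<alpha>1) * real m1 + real m2 / (1 + \<alpha>2)
           \<le> real t * real n * (1 + (1 + \<alpha>2) / (real r - 1 - \<alpha>2))" using P1 unfolding \<delta>_def .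
  next
    assume h: "real m1 + real m2 \<ge> real t * (1 - \<tau>) * real n" and a: "\<alpha>1 > 0"
    have "real m1 \<le> (\<tau> + (1 + \<alpha>2 + \<alpha>2 * real r) / (real r - 1 - \<alpha>2)) * (real t * real n) / \<alpha>1"
      by (rule part2[OF P1[unfolded \<delta>_def] _ _ a assms(5) refl rpos]) (use h in \<open>auto simp: algebra_simps\<close>)
    thus "real m1 \<le> (\<tau> + (1 + \<alpha>2 + \<alpha>2 * real r) / (real r - 1 - \<alpha>2)) * real t * real n / \<alpha>1"
      by (simp add: mult.assoc)
  qed
qed

end
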